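(* Let $T$ be a tree on $n\ge 1$ vertices. Then $\mathrm{dearth}(T)\ge \frac{1}{3}n-1$.
   Context: For a tree $T$, let $V_3(T)$ be the set of vertices of degree at least $3$, and $d(v)$ the degree of $v$ in $T$. Two vertices $u,v$ form an odd pair if they are non-adjacent in $T$ and the length of the unique $u$–$v$ path in $T$ is odd; $\mathrm{op}(T)$ is the number of (unordered) odd pairs. The dearth of $T$ is $\mathrm{dearth}(T)=\sum_{v\in V_3(T)}\frac{1}{6}d(v)(d(v)-1)+\mathrm{op}(T)$. *)

theory Defs
  imports Complex_Main
begin

definition simple_graph :: "'a set \<Rightarrow> ('a \<Rightarrow> 'a \<Rightarrow> bool) \<Rightarrow> bool" where
  "simple_graph V E \<longleftrightarrow> finite V \<and> (\<forall>u v. E u v \<longrightarrow> u \<in> V \<and> v \<in> V)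
     \<and> (\<forall>u v. E u v \<longrightarrow> E v u) \<and> (\<forall>v. \<not> E v v)"

text \<open>A path: a nonempty list of distinct vertices of V, consecutive ones adjacent.
Its length is the number of edges, i.e. length minus one.\<close>

definition is_path :: "'a set \<Rightarrow> ('a \<Rightarrow> 'a \<Rightarrow> bool) \<Rightarrow> 'a list \<Rightarrow> bool" where
  "is_path V E p \<longleftrightarrow> p \<noteq> [] \<and> distinct p \<and> set p \<subseteq> V
     \<and> (\<forall>i. Suc i < length p \<longrightarrow> E (p ! i) (p ! Suc i))"

definition connected_graph :: "'a set \<Rightarrow> ('a \<Rightarrow> 'a \<Rightarrow> bool) \<Rightarrow> bool" where
  "connected_graph V E \<longleftrightarrow> (\<forall>u\<in>V. \<forall>v\<in>V. \<exists>p. is_path V E p \<and> hd p = u \<and> last p = v)"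

definition acyclic_graph :: "'a set \<Rightarrow> ('a \<Rightarrow> 'a \<Rightarrow> bool) \<Rightarrow> bool" where
  "acyclic_graph V E \<longleftrightarrow> \<not> (\<exists>p. is_path V E p \<and> length p \<ge> 3 \<and> E (last p) (hd p))"

definition is_tree :: "'a set \<Rightarrow> ('a \<Rightarrow> 'a \<Rightarrow> bool) \<Rightarrow> bool" where
  "is_tree V E \<longleftrightarrow> simple_graph V E \<and> V \<noteq> {} \<and> connected_graph V E \<and> acyclic_graph V E"

definition degree :: "'a set \<Rightarrow> ('a \<Rightarrow> 'a \<Rightarrow> bool) \<Rightarrow> 'a \<Rightarrow> nat" where
  "degree V E v = card {u\<in>V. E u v}"

text \<open>Odd pair: non-adjacent vertices u, v joined by a path of odd length
(in a tree this is the unique u-v path).\<close>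

definition odd_pair :: "'a set \<Rightarrow> ('a \<Rightarrow> 'a \<Rightarrow> bool) \<Rightarrow> 'a \<Rightarrow> 'a \<Rightarrow> bool" where
  "odd_pair V E u v \<longleftrightarrow> u \<in> V \<and> v \<in> V \<and> \<not> E u v \<and>
     (\<exists>p. is_path V E p \<and> hd p = u \<and> last p = v \<and> odd (length p - 1))"

definition op_count :: "'a set \<Rightarrow> ('a \<Rightarrow> 'a \<Rightarrow> bool) \<Rightarrow> nat" where
  "op_count V E = card {{u, v} | u v. odd_pair V E u v}"

definition dearth :: "'a set \<Rightarrow> ('a \<Rightarrow> 'a \<Rightarrow> bool) \<Rightarrow> real" where
  "dearth V E = (\<Sum>v\<in>{v\<in>V. degree V E v \<ge> 3}.
       real (degree V E v) * (real (degree V E v) - 1) / 6) + real (op_count V E)"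

end

theory Submission
  imports Defs
begin

lemma path_len: "is_path V E p \<Longrightarrow> finite V \<Longrightarrow> length p \<le> card V"
  unfolding is_path_def by (metis card_mono distinct_card)

lemma path_cons:
  assumes "is_path V E p" "u \<in> V" "u \<notin> set p" "E u (hd p)"
  shows "is_path V E (u # p)"
  using assms unfolding is_path_def
proof (intro conjI allI impI)
  fix i assume a: "p \<noteq> [] \<and> distinct p \<and> set p \<subseteq> V \<and> (\<forall>i. Suc i < length p \<longrightarrow> E (p ! i) (p ! Suc i))"
    and b: "Suc i < length (u # p)"
  show "E ((u # p) ! i) ((u # p) ! Suc i)"
  proof (cases i)
    case 0 then show ?thesis using a assms(4) by (simp add: hd_conv_nth)
  next
    case (Suc j) then show ?thesis using a b by simp
  qed
qed (use assms in \<open>auto simp: is_path_def\<close>)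

lemma path_snoc:
  assumes "is_path V E q" "x \<in> V" "x \<notin> set q" "E (last q) x"
  shows "is_path V E (q @ [x])"
  using assms unfolding is_path_def
proof (intro conjI allI impI)
  fix i assume a: "q \<noteq> [] \<and> distinct q \<and> set q \<subseteq> V \<and> (\<forall>i. Suc i < length q \<longrightarrow> E (q ! i) (q ! Suc i))"
    and "Suc i < length (q @ [x])"
  then have "Suc i < length q \<or> Suc i = length q" by auto
  then show "E ((q @ [x]) ! i) ((q @ [x]) ! Suc i)"
  proof
    assume "Suc i < length q" then show ?thesis using a by (simp add: nth_append)
  next
    assume h: "Suc i = length q"
    then have "i = length q - 1" by simp
    then have "q ! i = last q" using a by (simp add: last_conv_nth)
    then show ?thesis using h assms(4) by (simp add: nth_append)
  qed
qed (use assms in \<open>auto simp: is_path_def\<close>)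

lemma path_take:
  assumes "is_path V E p" "0 < k"
  shows "is_path V E (take k p)"
  using assms unfolding is_path_def
  by (auto dest: in_set_takeD)

lemma leaf_exists:
  assumes "is_tree V E" "card V \<ge> 2"
  shows "\<exists>x y. x \<in> V \<and> y \<in> V \<and> E x y \<and> (\<forall>u. E u x \<longrightarrow> u = y)"
proof -
  have sg: "simple_graph V E" and con: "connected_graph V E" and ac: "acyclic_graph V E"
    using assms(1) by (auto simp: is_tree_def)
  have fin: "finite V" using sg by (simp add: simple_graph_def)
  obtain a b where ab: "a \<in> V" "b \<in> V" "a \<noteq> b"
    using assms(2) by (metis One_nat_def card.empty card_1_singletonE empty_iff insert_iff
        is_singletonI' is_singleton_altdef not_less_eq_eq numeral_2_eq_2 zero_le)
  obtain p0 where p0: "is_path V E p0" "hd p0 = a" "last p0 = b"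
    using con ab unfolding connected_graph_def by blast
  have "length p0 \<ge> 2"
  proof (rule ccontr)
    assume "\<not> ?thesis"
    then have "length p0 = 1 \<or> length p0 = 0" by linarith
    then show False using p0 ab
      by (auto simp: is_path_def length_Suc_conv)
  qed
  obtain p where p: "is_path V E p \<and> length p \<ge> 2"
    and pmax: "\<forall>q. is_path V E q \<and> length q \<ge> 2 \<longrightarrow> length q \<le> length p"
    using ex_has_greatest_nat[of "\<lambda>q. is_path V E q \<and> length q \<ge> 2" p0 length "Suc (card V)"]
      p0 \<open>length p0 \<ge> 2\<close> path_len[OF _ fin] by (metis le_imp_less_Suc)
  have pp: "is_path V E p" and lp: "length p \<ge> 2" using p by auto
  have E01: "E (p!0) (p!1)" using pp lp unfolding is_path_def by auto
  have inV: "p!0 \<in> V" "p!1 \<in> V" using pp lp unfolding is_path_def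
    by (auto dest!: nth_mem[of _ p])
  have leaf: "\<forall>u. E u (p!0) \<longrightarrow> u = p!1"
  proof (intro allI impI)
    fix u assume Eu: "E u (p!0)"
    have uV: "u \<in> V" using Eu sg by (simp add: simple_graph_def)
    have hdp: "hd p = p!0" using lp by (cases p) auto
    show "u = p!1"
    proof (cases "u \<in> set p")
      case False
      then have "is_path V E (u # p)" using path_cons[OF pp uV] Eu hdp by simp
      then show ?thesis using pmax lp by fastforce
    next
      case True
      then obtain i where i: "i < length p" "p!i = u" by (meson in_set_conv_nth)
      have "i \<noteq> 0" using i Eu sg unfolding simple_graph_def by (metis)
      moreover have "\<not> i \<ge> 2"
      proof
        assume "i \<ge> 2"
        have "is_path V E (take (Suc i) p)" using path_take[OF pp] by simp
        moreover have "length (take (Suc i) p) \<ge> 3" using i \<open>i \<ge> 2\<close> by simp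
        moreover have "last (take (Suc i) p) = u" using i
          by (subst last_conv_nth) (auto simp: min_def intro!: arg_cong[where f="(!) p"])
        moreover have "hd (take (Suc i) p) = p!0" using lp by (cases p) auto
        ultimately show False using ac Eu unfolding acyclic_graph_def by metis
      qed
      ultimately have "i = 1" by linarith
      then show ?thesis using i by simp
    qed
  qed
  show ?thesis using E01 inV leaf by blast
qed


lemma odd_partner:
  assumes tr: "is_tree V E" and xV: "x \<in> V" and yV: "y \<in> V" and Exy: "E x y"
    and leaf: "\<forall>u. E u x \<longrightarrow> u = y"
    and vV: "v \<in> V" and vx: "v \<noteq> x" and vy: "v \<noteq> y" and nE: "\<not> E v y"
  shows "odd_pair V E v x \<or> odd_pair V E v y"
proof -
  have sg: "simple_graph V E" and con: "connected_graph V E"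
    using tr by (auto simp: is_tree_def)
  have sym: "\<And>a b. E a b \<Longrightarrow> E b a" using sg by (simp add: simple_graph_def)
  obtain q where q: "is_path V E q" "hd q = v" "last q = y"
    using con vV yV unfolding connected_graph_def by blast
  have qne: "q \<noteq> []" and dq: "distinct q" and qE: "\<And>i. Suc i < length q \<Longrightarrow> E (q!i) (q!Suc i)"
    using q(1) unfolding is_path_def by auto
  have xq: "x \<notin> set q"
  proof
    assume "x \<in> set q"
    then obtain i where i: "i < length q" "q!i = x" by (meson in_set_conv_nth)
    have "i \<noteq> 0" using i q(2) vx qne by (metis hd_conv_nth)
    moreover have "i \<noteq> length q - 1" using i q(3) vy qne Exy sg
      by (metis last_conv_nth simple_graph_def)
    ultimately have i1: "Suc i < length q" "0 < i" using i by auto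
    have "q!(i-1) = y" using leaf qE[of "i-1"] i1 i by (simp add: sym)
    moreover have "q!(Suc i) = y" using leaf qE[of i] i1 i sym by blast
    ultimately have "q!(i-1) = q!(Suc i)" by simp
    moreover have "i - 1 < length q" using i1 by simp
    ultimately have "i - 1 = Suc i" using dq i1 nth_eq_iff_index_eq by blast
    then show False by simp
  qed
  have q2: "is_path V E (q @ [x])" using path_snoc[OF q(1) xV xq] q(3) sym Exy by simp
  have nvx: "\<not> E v x" using leaf vy by blast
  show ?thesis
  proof (cases "odd (length q - 1)")
    case True
    then have "odd_pair V E v y" using q vV yV nE unfolding odd_pair_def by blast
    then show ?thesis by simp
  next
    case False
    then have "odd (length (q @ [x]) - 1)" using qne by (cases q) auto
    moreover have "hd (q @ [x]) = v" "last (q @ [x]) = x" using q qne by auto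
    ultimately have "odd_pair V E v x" using q2 vV xV nvx unfolding odd_pair_def by blast
    then show ?thesis by simp
  qed
qed

theorem lemma29:
  fixes V :: "'a set" and E :: "'a \<Rightarrow> 'a \<Rightarrow> bool"
  assumes "is_tree V E" and "card V \<ge> 1"
  shows "dearth V E \<ge> real (card V) / 3 - 1"
proof -
  have sg: "simple_graph V E" using assms(1) by (simp add: is_tree_def)
  have fin: "finite V" using sg by (simp add: simple_graph_def)
  let ?S = "(\<Sum>v\<in>{v\<in>V. degree V E v \<ge> 3}. real (degree V E v) * (real (degree V E v) - 1) / 6)"
  have Snn: "?S \<ge> 0" by (intro sum_nonneg) auto
  have dd: "dearth V E = ?S + real (op_count V E)" by (simp add: dearth_def)
  show ?thesis
  proof (cases "card V \<le> 3")
    case True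
    then show ?thesis using Snn dd by simp
  next
    case False
    then obtain x y where xy: "x \<in> V" "y \<in> V" "E x y" "\<forall>u. E u x \<longrightarrow> u = y"
      using leaf_exists[OF assms(1)] by fastforce
    define N where "N = {u\<in>V. E u y}"
    define d where "d = degree V E y"
    have dN: "d = card N" by (simp add: N_def d_def degree_def)
    have sym: "\<And>a b. E a b \<Longrightarrow> E b a" using sg by (simp add: simple_graph_def)
    have xN: "x \<in> N" using xy N_def by simp
    have yN: "y \<notin> N" using sg N_def by (simp add: simple_graph_def)
    have NV: "insert y N \<subseteq> V" using N_def xy by auto
    define W where "W = V - insert y N"
    have finN: "finite N" using fin N_def by simp
    have ci: "card (insert y N) = d + 1" using finN yN dN by simp
    have cW: "card W = card V - (d + 1)"
      unfolding W_def using card_Diff_subset[OF _ NV] finN ci by simp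
    have dle: "d + 1 \<le> card V" using card_mono[OF fin NV] ci by simp
    define g where "g v = (if odd_pair V E v x then {v, x} else {v, y})" for v
    define P where "P = {{u, v} | u v. odd_pair V E u v}"
    have finP: "finite P"
    proof (rule finite_subset[of _ "Pow V"])
      show "P \<subseteq> Pow V" unfolding P_def odd_pair_def by auto
    qed (use fin in simp)
    have gP: "g ` W \<subseteq> P"
    proof
      fix s assume "s \<in> g ` W"
      then obtain v where v: "v \<in> W" "s = g v" by blast
      have "v \<in> V" "v \<noteq> x" "v \<noteq> y" "\<not> E v y" using v xN unfolding W_def N_def by auto
      then have "odd_pair V E v x \<or> odd_pair V E v y"
        using odd_partner[OF assms(1) xy] by blast
      then show "s \<in> P" using v unfolding g_def P_def by auto
    qed
    have ginj: "inj_on g W"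
    proof
      fix v w assume vw: "v \<in> W" "w \<in> W" "g v = g w"
      have "v \<noteq> x" "v \<noteq> y" using vw xN unfolding W_def by auto
      moreover have "v \<in> g v" unfolding g_def by simp
      then have "v \<in> g w" using vw(3) by simp
      moreover have "g w = {w,x} \<or> g w = {w,y}" unfolding g_def by simp
      ultimately show "v = w" by blast
    qed
    have "card W \<le> op_count V E"
      unfolding op_count_def P_def[symmetric]
      using card_inj_on_le[OF ginj gP finP] .
    then have opb: "real (op_count V E) \<ge> real (card V) - real d - 1"
      using cW dle by linarith
    show ?thesis
    proof (cases "d \<ge> 3")
      case False
      then show ?thesis using opb Snn dd \<open>\<not> card V \<le> 3\<close> by simp
    next
      case True
      define t where "t = real d * (real d - 1) / 6"
      have h1: "t \<le> ?S"
        using member_le_sum[of y "{v\<in>V. degree V E v \<ge> 3}"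
            "\<lambda>v. real (degree V E v) * (real (degree V E v) - 1) / 6"] True xy(2) fin
        unfolding d_def t_def by fastforce
      have h2: "real d + 1 \<le> real (card V)" using dle by linarith
      have h3: "t + 2 * (real d + 1) / 3 - real d \<ge> 0"
      proof -
        have "(real d - 3/2) * (real d - 3/2) \<ge> 0" by simp
        then show ?thesis unfolding t_def by (simp add: algebra_simps divide_simps)
      qed
      have h4: "dearth V E = ?S + real (op_count V E)" by (rule dd)
      have "t + (real (card V) - real d - 1) \<ge> real (card V) / 3 - 1" using h2 h3 by (simp add: field_simps)
      then have "?S + real (op_count V E) \<ge> real (card V) / 3 - 1" using h1 opb by linarith
      then show ?thesis using h4 by simp
    qed
  qed
qed

end
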